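(* Let $u$ be a $\rho,\lambda$-Catalan word and $v$ a $\lambda,\mu$-Catalan word. Then for every configuration of the two-stacks-in-series machine from which $uv$ can be applied, $vu$ can also be applied, and applying $uv$ and applying $vu$ yield the same configuration (same remaining input, same contents of both stacks, same output). In particular, if $u$ and $v$ are nonempty, then $uv$ is a forbidden word.
   Context: Two stacks in series: a machine with an input stream, a first stack, a second stack and an output stream, with three moves: $\rho$ moves the next element of the input onto the top of the first stack; $\lambda$ moves the top element of the first stack onto the top of the second stack; $\mu$ moves the top element of the second stack to the end of the output. A word over $\{\rho,\lambda,\mu\}$ acts on configurations by performing the moves left to right (a move can only be applied if the relevant source is nonempty). For letters $x,y$, an $x,y$-Catalan word is a word over $\{x,y\}$ with equally many $x$'s and $y$'s such that every prefix contains at least as many $x$'s as $y$'s. Order the letters by $\rho<\lambda<\mu$ and compare words lexicographically; a word $w$ over $\{\rho,\lambda,\mu\}$ is forbidden if there is another word $w'$ with $w'>w$ that has the same effect on the machine as $w$. *)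

theory Defs
  imports Main
begin

datatype move = Rho | Lam | Mu

fun move_rank :: "move \<Rightarrow> nat" where
  "move_rank Rho = 0" | "move_rank Lam = 1" | "move_rank Mu = 2"

definition move_less :: "move \<Rightarrow> move \<Rightarrow> bool" where
  "move_less x y \<longleftrightarrow> move_rank x < move_rank y"

definition word_less :: "move list \<Rightarrow> move list \<Rightarrow> bool" where
  "word_less w w' \<longleftrightarrow> lexordp move_less w w'"

text \<open>Configuration: (input, first stack, second stack, output).
  The next input element is the head of the input list; the top of each stack is
  the head of its list; the output is read left to right (new elements appended at the end).\<close>
type_synonym 'a config = "'a list \<times> 'a list \<times> 'a list \<times> 'a list"

fun step :: "move \<Rightarrow> 'a config \<Rightarrow> 'a config option" where
  "step Rho (i, s1, s2, out) =
     (case i of [] \<Rightarrow> None | x # i' \<Rightarrow> Some (i', x # s1, s2, out))"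
| "step Lam (i, s1, s2, out) =
     (case s1 of [] \<Rightarrow> None | x # s1' \<Rightarrow> Some (i, s1', x # s2, out))"
| "step Mu (i, s1, s2, out) =
     (case s2 of [] \<Rightarrow> None | x # s2' \<Rightarrow> Some (i, s1, s2', out @ [x]))"

fun run :: "move list \<Rightarrow> 'a config \<Rightarrow> 'a config option" where
  "run [] c = Some c"
| "run (m # w) c = (case step m c of None \<Rightarrow> None | Some c' \<Rightarrow> run w c')"

definition count_letter :: "move \<Rightarrow> move list \<Rightarrow> nat" where
  "count_letter x w = length (filter (\<lambda>m. m = x) w)"

definition catalan :: "move \<Rightarrow> move \<Rightarrow> move list \<Rightarrow> bool" where
  "catalan x y w \<longleftrightarrow> set w \<subseteq> {x, y} \<and> count_letter x w = count_letter y w \<and>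
     (\<forall>k \<le> length w. count_letter y (take k w) \<le> count_letter x (take k w))"

definition same_effect :: "'a itself \<Rightarrow> move list \<Rightarrow> move list \<Rightarrow> bool" where
  "same_effect _ w w' \<longleftrightarrow> (\<forall>c :: 'a config. run w c = run w' c)"

definition forbidden :: "'a itself \<Rightarrow> move list \<Rightarrow> bool" where
  "forbidden T w \<longleftrightarrow> (\<exists>w'. word_less w w' \<and> same_effect T w w')"

end

theory Submission
  imports Defs
begin

lemma run_append: "run (a @ b) c = (case run a c of None \<Rightarrow> None | Some c' \<Rightarrow> run b c')"
  by (induction a arbitrary: c) (auto split: option.splits)

lemma step_frame:
  "step m (i, s1, s2, o') = Some (i', s1', s2', o2) \<Longrightarrow>
   step m (i @ a, s1 @ b, s2 @ c, p @ o') = Some (i' @ a, s1' @ b, s2' @ c, p @ o2)"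
  by (cases m) (auto split: list.splits)

lemma run_frame:
  "run w (i, s1, s2, o') = Some (i', s1', s2', o2) \<Longrightarrow>
   run w (i @ a, s1 @ b, s2 @ c, p @ o') = Some (i' @ a, s1' @ b, s2' @ c, p @ o2)"
proof (induction w arbitrary: i s1 s2 o')
  case Nil then show ?case by auto
next
  case (Cons m w)
  then obtain d where d: "step m (i, s1, s2, o') = Some d" "run w d = Some (i', s1', s2', o2)"
    by (auto split: option.splits)
  obtain x y z t where dd: "d = (x,y,z,t)" by (cases d) auto
  show ?case using step_frame[OF d(1)[unfolded dd]] Cons.IH[OF d(2)[unfolded dd]] by simp
qed

lemma fail_rho: "run w (i, s1, s2, o') \<noteq> None \<Longrightarrow> count_letter Rho w \<le> length i"
proof (induction w arbitrary: i s1 s2 o')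
  case Nil then show ?case by (simp add: count_letter_def)
next
  case (Cons m w)
  then show ?case
    by (cases m; cases i; cases s1; cases s2; fastforce simp: count_letter_def)
qed

lemma fail_lam: "run w (i, s1, s2, o') \<noteq> None \<Longrightarrow> count_letter Lam w \<le> length s1 + count_letter Rho w"
proof (induction w arbitrary: i s1 s2 o')
  case Nil then show ?case by (simp add: count_letter_def)
next
  case (Cons m w)
  then show ?case
    by (cases m; cases i; cases s1; cases s2; fastforce simp: count_letter_def)
qed

lemma pos_u:
  "set w \<subseteq> {Rho, Lam} \<Longrightarrow>
   (\<forall>k \<le> length w. count_letter Lam (take k w) \<le> count_letter Rho (take k w) + length s1) \<Longrightarrow>
   length i = count_letter Rho w \<Longrightarrow>
   \<exists>s1' s2'. run w (i, s1, s2, o') = Some ([], s1', s2', o') \<and>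
     length s1' + count_letter Lam w = length s1 + count_letter Rho w"
proof (induction w arbitrary: i s1 s2)
  case Nil then show ?case by (simp add: count_letter_def)
next
  case (Cons m w)
  have pre: "count_letter Lam (take (Suc k) (m # w)) \<le> count_letter Rho (take (Suc k) (m # w)) + length s1"
    if "k \<le> length w" for k using Cons.prems(2) that by (metis Suc_le_mono length_Cons)
  show ?case
  proof (cases m)
    case Rho
    then obtain x i' where i: "i = x # i'" using Cons.prems(3)
      by (cases i) (auto simp: count_letter_def)
    have "\<exists>s1' s2'. run w (i', x # s1, s2, o') = Some ([], s1', s2', o') \<and>
     length s1' + count_letter Lam w = length (x # s1) + count_letter Rho w"
      apply (rule Cons.IH)
      using Cons.prems Rho i pre by (auto simp: count_letter_def)
    then show ?thesis using Rho i by (auto simp: count_letter_def)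
  next
    case Lam
    have "1 \<le> length s1" using pre[of 0] Lam by (simp add: count_letter_def)
    then obtain x s1t where s: "s1 = x # s1t" by (cases s1) auto
    have "\<exists>s1' s2'. run w (i, s1t, x # s2, o') = Some ([], s1', s2', o') \<and>
     length s1' + count_letter Lam w = length s1t + count_letter Rho w"
      apply (rule Cons.IH)
      using Cons.prems Lam s pre by (auto simp: count_letter_def)
    then show ?thesis using Lam s by (auto simp: count_letter_def)
  next
    case Mu then show ?thesis using Cons.prems by auto
  qed
qed

lemma pos_v:
  "set w \<subseteq> {Lam, Mu} \<Longrightarrow>
   (\<forall>k \<le> length w. count_letter Mu (take k w) \<le> count_letter Lam (take k w) + length s2) \<Longrightarrow>
   length s1 = count_letter Lam w \<Longrightarrow>
   \<exists>s2' Q. run w (i, s1, s2, o') = Some (i, [], s2', o' @ Q) \<and>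
     length s2' + count_letter Mu w = length s2 + count_letter Lam w"
proof (induction w arbitrary: s1 s2 o')
  case Nil then show ?case by (simp add: count_letter_def)
next
  case (Cons m w)
  have pre: "count_letter Mu (take (Suc k) (m # w)) \<le> count_letter Lam (take (Suc k) (m # w)) + length s2"
    if "k \<le> length w" for k using Cons.prems(2) that by (metis Suc_le_mono length_Cons)
  show ?case
  proof (cases m)
    case Lam
    then obtain x s1t where s: "s1 = x # s1t" using Cons.prems(3)
      by (cases s1) (auto simp: count_letter_def)
    have "\<exists>s2' Q. run w (i, s1t, x # s2, o') = Some (i, [], s2', o' @ Q) \<and>
     length s2' + count_letter Mu w = length (x # s2) + count_letter Lam w"
      apply (rule Cons.IH)
      using Cons.prems Lam s pre by (auto simp: count_letter_def)
    then show ?thesis using Lam s by (auto simp: count_letter_def)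
  next
    case Mu
    have "1 \<le> length s2" using pre[of 0] Mu by (simp add: count_letter_def)
    then obtain x s2t where s: "s2 = x # s2t" by (cases s2) auto
    have "\<exists>s2' Q. run w (i, s1, s2t, o' @ [x]) = Some (i, [], s2', (o' @ [x]) @ Q) \<and>
     length s2' + count_letter Mu w = length s2t + count_letter Lam w"
      apply (rule Cons.IH)
      using Cons.prems Mu s pre by (auto simp: count_letter_def)
    then show ?thesis using Mu s by (auto simp: count_letter_def)
  next
    case Rho then show ?thesis using Cons.prems by auto
  qed
qed

lemma count_app: "count_letter x (a @ b) = count_letter x a + count_letter x b"
  by (simp add: count_letter_def)

lemma cat_not: "catalan x y w \<Longrightarrow> z \<noteq> x \<Longrightarrow> z \<noteq> y \<Longrightarrow> count_letter z w = 0"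
  unfolding catalan_def count_letter_def by (auto simp: filter_empty_conv)

lemma cat_hd: "catalan x y w \<Longrightarrow> w \<noteq> [] \<Longrightarrow> hd w = x"
proof -
  assume c: "catalan x y w" and ne: "w \<noteq> []"
  then obtain a w' where w: "w = a # w'" by (cases w) auto
  have "count_letter y (take 1 w) \<le> count_letter x (take 1 w)" using c w
    unfolding catalan_def by auto
  moreover have "a \<in> {x,y}" using c w unfolding catalan_def by auto
  ultimately show ?thesis using w by (auto simp: count_letter_def split: if_splits)
qed

lemma same_all:
  fixes c :: "'a config"
  assumes u: "catalan Rho Lam u" and v: "catalan Lam Mu v"
  shows "run (u @ v) c = run (v @ u) c"
proof -
  obtain i s1 s2 o' where cc: "c = (i, s1, s2, o')" by (cases c) auto
  define n where "n = count_letter Rho u"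
  define m where "m = count_letter Lam v"
  have u0: "count_letter Mu u = 0" using cat_not[OF u] by simp
  have v0: "count_letter Rho v = 0" using cat_not[OF v] by simp
  have un: "count_letter Lam u = n" using u unfolding catalan_def n_def by simp
  have vm: "count_letter Mu v = m" using v unfolding catalan_def m_def by simp
  show ?thesis
  proof (cases "n \<le> length i \<and> m \<le> length s1")
    case False
    have "run (u @ v) c = None"
    proof (rule ccontr)
      assume "run (u @ v) c \<noteq> None"
      from fail_rho[OF this[unfolded cc]] fail_lam[OF this[unfolded cc]] False
      show False by (simp add: count_app un v0 n_def m_def)
    qed
    moreover have "run (v @ u) c = None"
    proof (rule ccontr)
      assume "run (v @ u) c \<noteq> None"
      from fail_rho[OF this[unfolded cc]] fail_lam[OF this[unfolded cc]] False
      show False by (simp add: count_app un v0 n_def m_def)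
    qed
    ultimately show ?thesis by simp
  next
    case True
    have "\<exists>s1' s2'. run u (take n i, [], [], []) = Some ([], s1', s2', []) \<and>
       length s1' + count_letter Lam u = length ([]::'a list) + count_letter Rho u"
      apply (rule pos_u) using u True unfolding catalan_def n_def by auto
    then obtain T where U: "run u (take n i, [], [], []) = Some ([], [], T, [])"
      using un n_def by auto
    have "\<exists>s2' Q. run v (([]::'a list), take m s1, [], []) = Some ([], [], s2', [] @ Q) \<and>
       length s2' + count_letter Mu v = length ([]::'a list) + count_letter Lam v"
      apply (rule pos_v) using v True unfolding catalan_def m_def by auto
    then obtain Q where V: "run v (([]::'a list), take m s1, [], []) = Some ([], [], [], Q)"
      using vm m_def by auto
    have U1: "run u (i, s1, s2, o') = Some (drop n i, s1, T @ s2, o')"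
      using run_frame[OF U, of "drop n i" s1 s2 o'] by simp
    have U2: "run u (i, drop m s1, s2, o' @ Q) = Some (drop n i, drop m s1, T @ s2, o' @ Q)"
      using run_frame[OF U, of "drop n i" "drop m s1" s2 "o' @ Q"] by simp
    have V1: "run v (i, s1, s2, o') = Some (i, drop m s1, s2, o' @ Q)"
      using run_frame[OF V, of i "drop m s1" s2 o'] by simp
    have V2: "run v (drop n i, s1, T @ s2, o') = Some (drop n i, drop m s1, T @ s2, o' @ Q)"
      using run_frame[OF V, of "drop n i" "drop m s1" "T @ s2" o'] by simp
    show ?thesis using U1 U2 V1 V2 cc by (simp add: run_append)
  qed
qed

theorem mainTheorem3:
  fixes u v :: "move list" and c :: "'a config"
  assumes "catalan Rho Lam u" and "catalan Lam Mu v"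
  shows "(run (u @ v) c \<noteq> None \<longrightarrow> run (v @ u) c = run (u @ v) c)
         \<and> (u \<noteq> [] \<and> v \<noteq> [] \<longrightarrow> forbidden TYPE('a) (u @ v))"
proof (intro conjI impI)
  show "run (v @ u) c = run (u @ v) c" by (rule sym[OF same_all[OF assms]])
next
  assume ne: "u \<noteq> [] \<and> v \<noteq> []"
  obtain u' where u': "u = Rho # u'" using cat_hd[OF assms(1)] ne by (cases u) auto
  obtain v' where v': "v = Lam # v'" using cat_hd[OF assms(2)] ne by (cases v) auto
  have "word_less (u @ v) (v @ u)"
    unfolding word_less_def u' v' by (simp add: List.lexordp_def move_less_def)
  moreover have "same_effect TYPE('a) (u @ v) (v @ u)"
    unfolding same_effect_def using same_all[OF assms] by blast
  ultimately show "forbidden TYPE('a) (u @ v)" unfolding forbidden_def by blast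
qed

end
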